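(* Let $\mu$ be a probability measure on $[0,1]$. Then $\tilde\rho(\mu)(\bar\mu)=\max_{p\in[0,1]}\tilde\rho(\mu)(p)$, and for every $p\in[0,1]$, \[\tilde\rho(\mu)(\bar\mu)-\tilde\rho(\mu)(p)\le 2|\bar\mu-p|.\] If moreover $\mu$ has a density bounded by some constant $M>0$, then $\rho(\mu)=\tilde\rho(\mu)$ and \[0\le \rho(\mu)(\bar\mu)-\rho(\mu)(p)\le M|\bar\mu-p|^2\qquad\text{for all }p\in[0,1].\]
   Context: For a probability measure $\mu$ on $[0,1]$, let $\bar\mu:=\int_{[0,1]}x\,\mathrm d\mu(x)$, and write $\mu[a,b]$, $\mu[a,b)$, $\mu\{p\}$ for the $\mu$-measure of the corresponding sets. Define functions $\tilde\rho(\mu),\rho(\mu):[0,1]\to\mathbb R$ by \[\tilde\rho(\mu)(p):=\int_0^p\big(\mu[0,\lambda]+\mu[0,\lambda)\big)\,\mathrm d\lambda+\big(\mu[0,p]+\mu[0,p)\big)(\bar\mu-p),\] \[\rho(\mu)(p):=\tilde\rho(\mu)(p)+\mu\{p\}\Big(\int_0^p\mu[0,\lambda]\,\mathrm d\lambda+\int_p^1\mu[\lambda,1]\,\mathrm d\lambda\Big).\] "$\mu$ has a density bounded by $M$" means $\mu$ is absolutely continuous with respect to Lebesgue measure with a density $f$ satisfying $f\le M$. *)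

theory Defs
  imports "HOL-Probability.Probability"
begin

definition prob_on_unit :: "real measure \<Rightarrow> bool" where
  "prob_on_unit \<mu> \<longleftrightarrow> prob_space \<mu> \<and> sets \<mu> = sets (restrict_space borel {0..1::real})"

definition mean :: "real measure \<Rightarrow> real" where
  "mean \<mu> = integral\<^sup>L \<mu> (\<lambda>x. x)"

definition cdf2 :: "real measure \<Rightarrow> real \<Rightarrow> real" where
  "cdf2 \<mu> l = measure \<mu> {0..l} + measure \<mu> {0..<l}"

definition rho_tilde :: "real measure \<Rightarrow> real \<Rightarrow> real" where
  "rho_tilde \<mu> p = integral {0..p} (\<lambda>l. cdf2 \<mu> l) + cdf2 \<mu> p * (mean \<mu> - p)"

definition rho :: "real measure \<Rightarrow> real \<Rightarrow> real" where
  "rho \<mu> p = rho_tilde \<mu> p + measure \<mu> {p} *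
     (integral {0..p} (\<lambda>l. measure \<mu> {0..l}) + integral {p..1} (\<lambda>l. measure \<mu> {l..1}))"

definition density_bounded_by :: "real measure \<Rightarrow> real \<Rightarrow> bool" where
  "density_bounded_by \<mu> M \<longleftrightarrow> (\<exists>f. f \<in> borel_measurable borel \<and> (\<forall>x. 0 \<le> f x \<and> f x \<le> M) \<and>
      (\<forall>A\<in>sets \<mu>. emeasure \<mu> A = (\<integral>\<^sup>+ x\<in>A. ennreal (f x) \<partial>lborel)))"

end

theory Submission
  imports Defs
begin

lemma pu_basic:
  assumes "prob_on_unit \<mu>"
  shows "prob_space \<mu>" "space \<mu> = {0..1}"
    "\<And>A. A \<subseteq> {0..1} \<Longrightarrow> A \<in> sets borel \<Longrightarrow> A \<in> sets \<mu>"
proof -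
  show "prob_space \<mu>" using assms unfolding prob_on_unit_def by auto
  have s: "sets \<mu> = sets (restrict_space borel {0..1::real})" using assms unfolding prob_on_unit_def by auto
  show "space \<mu> = {0..1}" using sets_eq_imp_space_eq[OF s] by simp
  fix A :: "real set" assume "A \<subseteq> {0..1}" "A \<in> sets borel"
  then show "A \<in> sets \<mu>" unfolding s by (simp add: sets_restrict_space_iff)
qed

lemma cdf2_mono:
  assumes "prob_on_unit \<mu>" "0 \<le> a" "a \<le> b" "b \<le> 1"
  shows "cdf2 \<mu> a \<le> cdf2 \<mu> b"
proof -
  interpret prob_space \<mu> using pu_basic[OF assms(1)] by simp
  have "measure \<mu> {0..a} \<le> measure \<mu> {0..b}"
    by (rule finite_measure_mono) (use assms in \<open>auto intro!: pu_basic(3)[OF assms(1)]\<close>)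
  moreover have "measure \<mu> {0..<a} \<le> measure \<mu> {0..<b}"
    by (rule finite_measure_mono) (use assms in \<open>auto intro!: pu_basic(3)[OF assms(1)]\<close>)
  ultimately show ?thesis unfolding cdf2_def by simp
qed

lemma cdf2_bounds:
  assumes "prob_on_unit \<mu>"
  shows "0 \<le> cdf2 \<mu> a" "cdf2 \<mu> a \<le> 2"
proof -
  interpret prob_space \<mu> using pu_basic[OF assms(1)] by simp
  show "0 \<le> cdf2 \<mu> a" unfolding cdf2_def by simp
  have "measure \<mu> {0..a} \<le> 1" "measure \<mu> {0..<a} \<le> 1" by (simp_all add: measure_le_1)
  then show "cdf2 \<mu> a \<le> 2" unfolding cdf2_def by linarith
qed

lemma cdf2_int:
  assumes "prob_on_unit \<mu>" "0 \<le> a" "a \<le> b" "b \<le> 1"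
  shows "cdf2 \<mu> integrable_on {a..b}"
proof -
  have "mono_on {a..b} (cdf2 \<mu>)"
    by (rule mono_onI) (use assms cdf2_mono in auto)
  then show ?thesis by (rule integrable_on_mono_on)
qed

lemma cdf2_split:
  assumes "prob_on_unit \<mu>" "0 \<le> a" "a \<le> b" "b \<le> 1"
  shows "integral {0..b} (cdf2 \<mu>) = integral {0..a} (cdf2 \<mu>) + integral {a..b} (cdf2 \<mu>)"
  using Henstock_Kurzweil_Integration.integral_combine[OF assms(2) assms(3) cdf2_int[OF assms(1) order_refl _ assms(4)]] assms
  by auto

lemma cdf2_Ibounds:
  assumes "prob_on_unit \<mu>" "0 \<le> a" "a \<le> b" "b \<le> 1"
  shows "cdf2 \<mu> a * (b - a) \<le> integral {a..b} (cdf2 \<mu>)"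
        "integral {a..b} (cdf2 \<mu>) \<le> cdf2 \<mu> b * (b - a)"
proof -
  have i: "cdf2 \<mu> integrable_on {a..b}" using cdf2_int assms by blast
  have "integral {a..b} (\<lambda>x. cdf2 \<mu> a) \<le> integral {a..b} (cdf2 \<mu>)"
    by (rule integral_le) (use i assms cdf2_mono in auto)
  then have "(b - a) * cdf2 \<mu> a \<le> integral {a..b} (cdf2 \<mu>)" using assms by simp
  then show "cdf2 \<mu> a * (b - a) \<le> integral {a..b} (cdf2 \<mu>)" by (simp add: mult.commute)
  have "integral {a..b} (cdf2 \<mu>) \<le> integral {a..b} (\<lambda>x. cdf2 \<mu> b)"
    by (rule integral_le) (use i assms cdf2_mono in auto)
  then have "integral {a..b} (cdf2 \<mu>) \<le> (b - a) * cdf2 \<mu> b" using assms by simp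
  then show "integral {a..b} (cdf2 \<mu>) \<le> cdf2 \<mu> b * (b - a)" by (simp add: mult.commute)
qed

lemma mean_in:
  assumes "prob_on_unit \<mu>"
  shows "mean \<mu> \<in> {0..1}"
proof -
  interpret prob_space \<mu> using pu_basic[OF assms(1)] by simp
  have sp: "space \<mu> = {0..1}" using pu_basic[OF assms] by simp
  have meas: "(\<lambda>x. x) \<in> borel_measurable \<mu>"
  proof -
    have "(\<lambda>x::real. x) \<in> borel_measurable (restrict_space borel {0..1::real})"
      by (intro measurable_restrict_space1) simp
    then show ?thesis
      using assms unfolding prob_on_unit_def
      by (metis measurable_cong_sets)
  qed
  have ae: "AE x in \<mu>. 0 \<le> x \<and> x \<le> 1" using sp by (intro AE_I2) auto
  have int: "integrable \<mu> (\<lambda>x. x)"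
    by (rule integrable_const_bound[where B=1]) (use ae meas in auto)
  have "0 \<le> mean \<mu>" unfolding mean_def by (rule integral_nonneg_AE) (use ae in auto)
  moreover have "mean \<mu> \<le> integral\<^sup>L \<mu> (\<lambda>x. 1)" unfolding mean_def
    by (rule integral_mono_AE) (use ae int in auto)
  ultimately show ?thesis by (simp add: prob_space)
qed

lemma aux_lin: "(D::real) = X - I \<Longrightarrow> Y \<le> I \<Longrightarrow> X - Y \<le> T \<Longrightarrow> D \<le> T"
  by linarith

lemma diff_le:
  assumes "prob_on_unit \<mu>" "0 \<le> p" "p \<le> m" "m \<le> 1""m = mean \<mu>"
  shows "rho_tilde \<mu> m - rho_tilde \<mu> p = integral {p..m} (cdf2 \<mu>) - cdf2 \<mu> p * (m - p)"
  using cdf2_split[OF assms(1-4)] assms(5) unfolding rho_tilde_def by (simp add: algebra_simps)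

lemma diff_ge:
  assumes "prob_on_unit \<mu>" "0 \<le> m" "m \<le> p" "p \<le> 1""m = mean \<mu>"
  shows "rho_tilde \<mu> m - rho_tilde \<mu> p = cdf2 \<mu> p * (p - m) - integral {m..p} (cdf2 \<mu>)"
  using cdf2_split[OF assms(1-4)] assms(5) unfolding rho_tilde_def by (simp add: algebra_simps)

lemma dens_bound:
  assumes "prob_on_unit \<mu>" "density_bounded_by \<mu> M" "0 \<le> a" "a \<le> b" "b \<le> 1"
  shows "measure \<mu> {a..b} \<le> M * (b - a)"
proof -
  interpret prob_space \<mu> using pu_basic[OF assms(1)] by simp
  obtain f where f: "f \<in> borel_measurable borel" "\<forall>x. 0 \<le> f x \<and> f x \<le> M"
    "\<forall>A\<in>sets \<mu>. emeasure \<mu> A = (\<integral>\<^sup>+ x\<in>A. ennreal (f x) \<partial>lborel)"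
    using assms(2) unfolding density_bounded_by_def by blast
  have M0: "0 \<le> M" using f(2) by (meson order_trans)
  have A: "{a..b} \<in> sets \<mu>" using pu_basic(3)[OF assms(1)] assms by auto
  have "emeasure \<mu> {a..b} = (\<integral>\<^sup>+ x. ennreal (f x) * indicator {a..b} x \<partial>lborel)"
    using f(3) A by auto
  also have "\<dots> \<le> (\<integral>\<^sup>+ x. ennreal M * indicator {a..b} x \<partial>lborel)"
    by (intro nn_integral_mono) (use f(2) in \<open>auto simp: indicator_def intro: ennreal_leI\<close>)
  also have "\<dots> = ennreal M * ennreal (b - a)"
    using assms by (simp add: nn_integral_cmult_indicator)
  also have "\<dots> = ennreal (M * (b - a))" using M0 assms by (simp add: ennreal_mult)
  finally have "ennreal (measure \<mu> {a..b}) \<le> ennreal (M * (b - a))"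
    by (simp add: emeasure_eq_measure)
  then show ?thesis using M0 assms by (simp add: ennreal_le_iff mult_nonneg_nonneg)
qed

lemma cdf2_lip:
  assumes "prob_on_unit \<mu>" "density_bounded_by \<mu> M" "0 \<le> a" "a \<le> b" "b \<le> 1"
  shows "cdf2 \<mu> b - cdf2 \<mu> a \<le> 2 * M * (b - a)"
proof -
  interpret prob_space \<mu> using pu_basic[OF assms(1)] by simp
  have S: "\<And>A. A \<subseteq> {0..1} \<Longrightarrow> A \<in> sets borel \<Longrightarrow> A \<in> sets \<mu>" using pu_basic(3)[OF assms(1)] by blast
  have e: "{0..b} = {0..<a} \<union> {a..b}" using assms by auto
  have "measure \<mu> {0..b} \<le> measure \<mu> {0..<a} + measure \<mu> {a..b}"
    unfolding e by (rule measure_subadditive) (use assms in \<open>auto intro!: S\<close>)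
  moreover have "measure \<mu> {0..<a} \<le> measure \<mu> {0..a}"
    by (rule finite_measure_mono) (use assms in \<open>auto intro!: S\<close>)
  moreover have "measure \<mu> {0..<b} \<le> measure \<mu> {0..b}"
    by (rule finite_measure_mono) (use assms in \<open>auto intro!: S\<close>)
  moreover have "measure \<mu> {a..b} \<le> M * (b - a)" using dens_bound assms by blast
  ultimately show ?thesis unfolding cdf2_def by linarith
qed

lemma lin_int:
  fixes a b c d :: real
  assumes "a \<le> b"
  shows "((\<lambda>l. c + d * l) has_integral (c * (b - a) + d * ((b\<^sup>2 - a\<^sup>2) / 2))) {a..b}"
proof -
  have "((\<lambda>l. c) has_integral c * (b - a)) {a..b}"
    using has_integral_const_real[of c a b] assms by (simp add: mult.commute)
  moreover have "((\<lambda>l. d * l) has_integral d * ((b\<^sup>2 - a\<^sup>2) / 2)) {a..b}"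
    by (rule has_integral_mult_right[OF ident_has_integral[OF assms]])
  ultimately show ?thesis by (rule has_integral_add)
qed

lemma quad_le:
  assumes "prob_on_unit \<mu>" "density_bounded_by \<mu> M" "0 \<le> p" "p \<le> m" "m \<le> 1"
  shows "integral {p..m} (cdf2 \<mu>) \<le> cdf2 \<mu> p * (m - p) + M * (m - p)\<^sup>2"
proof -
  let ?g = "\<lambda>l. (cdf2 \<mu> p - 2 * M * p) + (2 * M) * l"
  have h: "(?g has_integral ((cdf2 \<mu> p - 2 * M * p) * (m - p) + (2 * M) * ((m\<^sup>2 - p\<^sup>2) / 2))) {p..m}"
    by (rule lin_int) (use assms in auto)
  have "integral {p..m} (cdf2 \<mu>) \<le> integral {p..m} ?g"
  proof (rule integral_le)
    show "cdf2 \<mu> integrable_on {p..m}" using cdf2_int assms by blast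
    show "?g integrable_on {p..m}" using h by blast
    fix x assume "x \<in> {p..m}"
    then show "cdf2 \<mu> x \<le> ?g x" using cdf2_lip[OF assms(1,2,3), of x] assms by (auto simp: algebra_simps)
  qed
  also have "\<dots> = cdf2 \<mu> p * (m - p) + M * (m - p)\<^sup>2"
    unfolding integral_unique[OF h] by (simp add: power2_eq_square field_simps)
  finally show ?thesis .
qed

lemma quad_ge:
  assumes "prob_on_unit \<mu>" "density_bounded_by \<mu> M" "0 \<le> m" "m \<le> p" "p \<le> 1"
  shows "cdf2 \<mu> p * (p - m) - M * (p - m)\<^sup>2 \<le> integral {m..p} (cdf2 \<mu>)"
proof -
  let ?g = "\<lambda>l. (cdf2 \<mu> p - 2 * M * p) + (2 * M) * l"
  have h: "(?g has_integral ((cdf2 \<mu> p - 2 * M * p) * (p - m) + (2 * M) * ((p\<^sup>2 - m\<^sup>2) / 2))) {m..p}"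
    by (rule lin_int) (use assms in auto)
  have "cdf2 \<mu> p * (p - m) - M * (p - m)\<^sup>2 = integral {m..p} ?g"
    unfolding integral_unique[OF h] by (simp add: power2_eq_square field_simps)
  also have "integral {m..p} ?g \<le> integral {m..p} (cdf2 \<mu>)"
  proof (rule integral_le)
    show "cdf2 \<mu> integrable_on {m..p}" using cdf2_int assms by blast
    show "?g integrable_on {m..p}" using h by blast
    fix x assume "x \<in> {m..p}"
    then show "?g x \<le> cdf2 \<mu> x" using cdf2_lip[OF assms(1,2), of x p] assms by (auto simp: algebra_simps)
  qed
  finally show ?thesis .
qed

lemma rho_eq:
  assumes "prob_on_unit \<mu>" "density_bounded_by \<mu> M" "0 \<le> p" "p \<le> 1"
  shows "rho \<mu> p = rho_tilde \<mu> p"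
proof -
  interpret prob_space \<mu> using pu_basic[OF assms(1)] by simp
  have "measure \<mu> {p..p} \<le> M * (p - p)" using dens_bound[OF assms(1,2,3) order_refl assms(4)] .
  then have "measure \<mu> {p} = 0" by (simp add: measure_nonneg antisym)
  then show ?thesis unfolding rho_def by simp
qed

theorem lemma2p1:
  fixes \<mu> :: "real measure"
  assumes "prob_on_unit \<mu>"
  shows "mean \<mu> \<in> {0..1} \<and> (\<forall>p\<in>{0..1}. rho_tilde \<mu> p \<le> rho_tilde \<mu> (mean \<mu>))
    \<and> (\<forall>p\<in>{0..1}. rho_tilde \<mu> (mean \<mu>) - rho_tilde \<mu> p \<le> 2 * \<bar>mean \<mu> - p\<bar>)
    \<and> (\<forall>M>0. density_bounded_by \<mu> M \<longrightarrow>
           (\<forall>p\<in>{0..1}. rho \<mu> p = rho_tilde \<mu> p) \<and>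
           (\<forall>p\<in>{0..1}. 0 \<le> rho \<mu> (mean \<mu>) - rho \<mu> p \<and>
                         rho \<mu> (mean \<mu>) - rho \<mu> p \<le> M * \<bar>mean \<mu> - p\<bar>^2))"
proof -
  define m where "m = mean \<mu>"
  have m: "0 \<le> m" "m \<le> 1" using mean_in[OF assms] unfolding m_def by auto
  have A: "0 \<le> rho_tilde \<mu> m - rho_tilde \<mu> p \<and> rho_tilde \<mu> m - rho_tilde \<mu> p \<le> 2 * \<bar>m - p\<bar>"
    if p: "0 \<le> p" "p \<le> 1" for p
  proof (cases "p \<le> m")
    case True
    note d = diff_le[OF assms p(1) True m(2) m_def]
    note b = cdf2_Ibounds[OF assms p(1) True m(2)]
    have "cdf2 \<mu> m \<le> 2" "0 \<le> cdf2 \<mu> p" using cdf2_bounds[OF assms] by auto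
    then have "(cdf2 \<mu> m - cdf2 \<mu> p) * (m - p) \<le> 2 * (m - p)"
      using True by (intro mult_right_mono) auto
    then have "cdf2 \<mu> m * (m - p) - cdf2 \<mu> p * (m - p) \<le> 2 * (m - p)"
      by (simp add: left_diff_distrib)
    moreover have "\<bar>m - p\<bar> = m - p" using True by simp
    ultimately show ?thesis using d b by linarith
  next
    case False
    then have mp: "m \<le> p" by simp
    note d = diff_ge[OF assms m(1) mp p(2) m_def]
    note b = cdf2_Ibounds[OF assms m(1) mp p(2)]
    have "cdf2 \<mu> p \<le> 2" "0 \<le> cdf2 \<mu> m" using cdf2_bounds[OF assms] by auto
    then have "(cdf2 \<mu> p - cdf2 \<mu> m) * (p - m) \<le> 2 * (p - m)"
      using False by (intro mult_right_mono) auto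
    then have "cdf2 \<mu> p * (p - m) - cdf2 \<mu> m * (p - m) \<le> 2 * (p - m)"
      by (simp add: left_diff_distrib)
    moreover have "\<bar>m - p\<bar> = p - m" using False by simp
    ultimately have "rho_tilde \<mu> m - rho_tilde \<mu> p \<le> 2 * \<bar>m - p\<bar>"
      using d b(1) aux_lin[of "rho_tilde \<mu> m - rho_tilde \<mu> p" "cdf2 \<mu> p * (p - m)" "integral {m..p} (cdf2 \<mu>)" "cdf2 \<mu> m * (p - m)" "2 * (p - m)"] by simp
    moreover have "0 \<le> rho_tilde \<mu> m - rho_tilde \<mu> p" using d b(2) by linarith
    ultimately show ?thesis by simp
  qed
  have B: "rho \<mu> p = rho_tilde \<mu> p \<and> 0 \<le> rho \<mu> m - rho \<mu> p \<and> rho \<mu> m - rho \<mu> p \<le> M * \<bar>m - p\<bar>^2"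
    if M: "density_bounded_by \<mu> M" and p: "0 \<le> p" "p \<le> 1" for p M
  proof -
    have e: "rho \<mu> p = rho_tilde \<mu> p" "rho \<mu> m = rho_tilde \<mu> m"
      using rho_eq[OF assms M] p m by auto
    have "rho_tilde \<mu> m - rho_tilde \<mu> p \<le> M * \<bar>m - p\<bar>^2"
    proof (cases "p \<le> m")
      case True
      then show ?thesis using diff_le[OF assms p(1) True m(2) m_def] quad_le[OF assms M p(1) True m(2)]
        by (simp add: power2_abs)
    next
      case False
      then have mp: "m \<le> p" by simp
      then show ?thesis using diff_ge[OF assms m(1) mp p(2) m_def] quad_ge[OF assms M m(1) mp p(2)]
        by (simp add: power2_abs power2_commute)
    qed
    then show ?thesis using e A[OF p] by auto
  qed
  have C: "\<forall>M>0. density_bounded_by \<mu> M \<longrightarrow>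
           (\<forall>p\<in>{0..1}. rho \<mu> p = rho_tilde \<mu> p) \<and>
           (\<forall>p\<in>{0..1}. 0 \<le> rho \<mu> m - rho \<mu> p \<and>
                         rho \<mu> m - rho \<mu> p \<le> M * \<bar>m - p\<bar>^2)"
  proof (intro allI impI conjI ballI)
    fix M p :: real assume "0 < M" "density_bounded_by \<mu> M" "p \<in> {0..1}"
    then show "rho \<mu> p = rho_tilde \<mu> p" "0 \<le> rho \<mu> m - rho \<mu> p"
      "rho \<mu> m - rho \<mu> p \<le> M * \<bar>m - p\<bar>^2" using B[of M p] by auto
  qed
  have D: "\<forall>p\<in>{0..1}. rho_tilde \<mu> p \<le> rho_tilde \<mu> m" using A by auto
  have E: "\<forall>p\<in>{0..1}. rho_tilde \<mu> m - rho_tilde \<mu> p \<le> 2 * \<bar>m - p\<bar>" using A by auto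
  show ?thesis using m C D E unfolding m_def by auto
qed

end
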